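(* Let $(A_i,\omega_i)$, $i=1,2$, be baric algebras over $K$. Then $A_1\bowtie A_2$ is associative if and only if $xy=(\omega_1\bowtie\omega_2)(y)\,x$ for all $x,y\in A_1\bowtie A_2$.
   Context: A baric algebra over a field $K$ is a pair $(A,\omega)$ where $A$ is a (not necessarily associative) $K$-algebra and $\omega:A\to K$ is a nonzero $K$-algebra homomorphism. For baric algebras $(A_1,\omega_1),(A_2,\omega_2)$, $A_1\bowtie A_2$ denotes the vector space $A_1\oplus A_2$ with product $(a_1,a_2)(b_1,b_2)=(a_1b_1+\omega_2(b_2)a_1,\ a_2b_2+\omega_1(b_1)a_2)$, and $\omega_1\bowtie\omega_2(a_1,a_2)=\omega_1(a_1)+\omega_2(a_2)$. *)

theory Defs
  imports Complex_Main
begin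

definition nonassoc_algebra ::
  "('k::field \<Rightarrow> 'a::ab_group_add \<Rightarrow> 'a) \<Rightarrow> ('a \<Rightarrow> 'a \<Rightarrow> 'a) \<Rightarrow> bool" where
  "nonassoc_algebra sc m \<longleftrightarrow>
     vector_space sc \<and>
     (\<forall>x y z. m (x + y) z = m x z + m y z) \<and>
     (\<forall>x y z. m x (y + z) = m x y + m x z) \<and>
     (\<forall>c x y. m (sc c x) y = sc c (m x y)) \<and>
     (\<forall>c x y. m x (sc c y) = sc c (m x y))"

definition baric_algebra ::
  "('k::field \<Rightarrow> 'a::ab_group_add \<Rightarrow> 'a) \<Rightarrow> ('a \<Rightarrow> 'a \<Rightarrow> 'a) \<Rightarrow> ('a \<Rightarrow> 'k) \<Rightarrow> bool" where
  "baric_algebra sc m \<omega> \<longleftrightarrow>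
     nonassoc_algebra sc m \<and>
     (\<forall>x y. \<omega> (x + y) = \<omega> x + \<omega> y) \<and>
     (\<forall>c x. \<omega> (sc c x) = c * \<omega> x) \<and>
     (\<forall>x y. \<omega> (m x y) = \<omega> x * \<omega> y) \<and>
     (\<exists>x. \<omega> x \<noteq> 0)"

definition bowtie_scale ::
  "('k \<Rightarrow> 'a \<Rightarrow> 'a) \<Rightarrow> ('k \<Rightarrow> 'b \<Rightarrow> 'b) \<Rightarrow> 'k \<Rightarrow> 'a \<times> 'b \<Rightarrow> 'a \<times> 'b" where
  "bowtie_scale sc1 sc2 c p = (sc1 c (fst p), sc2 c (snd p))"

definition bowtie_mult ::
  "('k \<Rightarrow> 'a::plus \<Rightarrow> 'a) \<Rightarrow> ('a \<Rightarrow> 'a \<Rightarrow> 'a) \<Rightarrow> ('a \<Rightarrow> 'k) \<Rightarrow>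
   ('k \<Rightarrow> 'b::plus \<Rightarrow> 'b) \<Rightarrow> ('b \<Rightarrow> 'b \<Rightarrow> 'b) \<Rightarrow> ('b \<Rightarrow> 'k) \<Rightarrow>
   'a \<times> 'b \<Rightarrow> 'a \<times> 'b \<Rightarrow> 'a \<times> 'b" where
  "bowtie_mult sc1 m1 \<omega>1 sc2 m2 \<omega>2 p q =
     (m1 (fst p) (fst q) + sc1 (\<omega>2 (snd q)) (fst p),
      m2 (snd p) (snd q) + sc2 (\<omega>1 (fst q)) (snd p))"

definition bowtie_omega ::
  "('a \<Rightarrow> 'k::plus) \<Rightarrow> ('b \<Rightarrow> 'k) \<Rightarrow> 'a \<times> 'b \<Rightarrow> 'k" where
  "bowtie_omega \<omega>1 \<omega>2 p = \<omega>1 (fst p) + \<omega>2 (snd p)"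

definition associative_mult :: "('a \<Rightarrow> 'a \<Rightarrow> 'a) \<Rightarrow> bool" where
  "associative_mult m \<longleftrightarrow> (\<forall>x y z. m (m x y) z = m x (m y z))"

end

theory Submission
  imports Defs
begin

lemma bar_facts:
  assumes "baric_algebra sc m \<omega>"
  shows "m x 0 = 0" "m 0 x = 0" "\<exists>u. \<omega> u = 1" "vector_space sc"
    "\<omega> 0 = 0"
proof -
  have na: "nonassoc_algebra sc m" and add: "\<forall>x y. \<omega> (x + y) = \<omega> x + \<omega> y"
    and sm: "\<forall>c x. \<omega> (sc c x) = c * \<omega> x" and nz: "\<exists>x. \<omega> x \<noteq> 0"
    using assms unfolding baric_algebra_def by auto
  have "m x (0+0) = m x 0 + m x 0" using na unfolding nonassoc_algebra_def by blast
  then show "m x 0 = 0" by simp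
  have "m (0+0) x = m 0 x + m 0 x" using na unfolding nonassoc_algebra_def by blast
  then show "m 0 x = 0" by simp
  show "vector_space sc" using na unfolding nonassoc_algebra_def by blast
  from nz obtain x where "\<omega> x \<noteq> 0" by blast
  then have "\<omega> (sc (inverse (\<omega> x)) x) = 1" using sm by simp
  then show "\<exists>u. \<omega> u = 1" by blast
  have "\<omega> (sc 0 0) = 0 * \<omega> 0" using sm by blast
  then show "\<omega> 0 = 0" proof -
    interpret vector_space sc by fact
    show ?thesis using \<open>\<omega> (sc 0 0) = 0 * \<omega> 0\<close> by simp
  qed
qed

theorem proposition6p1:
  fixes sc1 :: "'k::field \<Rightarrow> 'a::ab_group_add \<Rightarrow> 'a" and m1 :: "'a \<Rightarrow> 'a \<Rightarrow> 'a"
    and \<omega>1 :: "'a \<Rightarrow> 'k"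
    and sc2 :: "'k \<Rightarrow> 'b::ab_group_add \<Rightarrow> 'b" and m2 :: "'b \<Rightarrow> 'b \<Rightarrow> 'b"
    and \<omega>2 :: "'b \<Rightarrow> 'k"
  assumes "baric_algebra sc1 m1 \<omega>1" and "baric_algebra sc2 m2 \<omega>2"
  shows "associative_mult (bowtie_mult sc1 m1 \<omega>1 sc2 m2 \<omega>2) \<longleftrightarrow>
    (\<forall>x y. bowtie_mult sc1 m1 \<omega>1 sc2 m2 \<omega>2 x y
           = bowtie_scale sc1 sc2 (bowtie_omega \<omega>1 \<omega>2 y) x)"
proof -
  note f1 = bar_facts[OF assms(1)]
  note f2 = bar_facts[OF assms(2)]
  interpret v1: vector_space sc1 by (rule f1(4))
  interpret v2: vector_space sc2 by (rule f2(4))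
  have b1: "\<forall>x y. \<omega>1 (x + y) = \<omega>1 x + \<omega>1 y" "\<forall>c x. \<omega>1 (sc1 c x) = c * \<omega>1 x"
     "\<forall>x y. \<omega>1 (m1 x y) = \<omega>1 x * \<omega>1 y"
    using assms(1) unfolding baric_algebra_def by auto
  have b2: "\<forall>x y. \<omega>2 (x + y) = \<omega>2 x + \<omega>2 y" "\<forall>c x. \<omega>2 (sc2 c x) = c * \<omega>2 x"
     "\<forall>x y. \<omega>2 (m2 x y) = \<omega>2 x * \<omega>2 y"
    using assms(2) unfolding baric_algebra_def by auto
  let ?M = "bowtie_mult sc1 m1 \<omega>1 sc2 m2 \<omega>2"
  let ?W = "bowtie_omega \<omega>1 \<omega>2"
  show ?thesis
  proof
    assume A: "associative_mult ?M"
    obtain u1 where u1: "\<omega>1 u1 = 1" using f1(3) by blast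
    obtain u2 where u2: "\<omega>2 u2 = 1" using f2(3) by blast
    have e1: "m1 a c = sc1 (\<omega>1 c) a" for a c
    proof -
      have "?M (?M (a,0) (0,u2)) (c,0) = ?M (a,0) (?M (0,u2) (c,0))"
        using A unfolding associative_mult_def by blast
      then have "fst (?M (?M (a,0) (0,u2)) (c,0)) = fst (?M (a,0) (?M (0,u2) (c,0)))" by simp
      then show ?thesis
        using b2 by (simp add: bowtie_mult_def f1 f2 u2 v1.scale_right_distrib)
    qed
    have e2: "m2 a c = sc2 (\<omega>2 c) a" for a c
    proof -
      have "?M (?M (0,a) (u1,0)) (0,c) = ?M (0,a) (?M (u1,0) (0,c))"
        using A unfolding associative_mult_def by blast
      then have "snd (?M (?M (0,a) (u1,0)) (0,c)) = snd (?M (0,a) (?M (u1,0) (0,c)))" by simp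
      then show ?thesis
        using b1 by (simp add: bowtie_mult_def f1 f2 u1 v2.scale_right_distrib)
    qed
    show "\<forall>x y. ?M x y = bowtie_scale sc1 sc2 (?W y) x"
      by (simp add: bowtie_mult_def bowtie_scale_def bowtie_omega_def e1 e2
          v1.scale_left_distrib v2.scale_left_distrib add.commute)
  next
    assume C: "\<forall>x y. ?M x y = bowtie_scale sc1 sc2 (?W y) x"
    have W: "?W (bowtie_scale sc1 sc2 c x) = c * ?W x" for c x
      using b1 b2 by (simp add: bowtie_omega_def bowtie_scale_def distrib_left)
    have S: "bowtie_scale sc1 sc2 c (bowtie_scale sc1 sc2 d x) = bowtie_scale sc1 sc2 (c*d) x" for c d x
      by (simp add: bowtie_scale_def)
    show "associative_mult ?M"
      unfolding associative_mult_def
    proof (intro allI)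
      fix x y z
      have C': "?M p q = bowtie_scale sc1 sc2 (?W q) p" for p q using C by blast
      have "?M (?M x y) z = bowtie_scale sc1 sc2 (?W z) (bowtie_scale sc1 sc2 (?W y) x)"
        by (simp only: C')
      also have "\<dots> = bowtie_scale sc1 sc2 (?W y * ?W z) x" by (simp add: S mult.commute)
      also have "\<dots> = ?M x (?M y z)" by (simp only: C' W mult.commute)
      finally show "?M (?M x y) z = ?M x (?M y z)" .
    qed
  qed
qed

end
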